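(* Let $q$ be a prime power, let $n,k$ be integers with $3\le k\le n-2\le q-2$, and let $h=(k-1)+r$ with $k-1\le r\le q-k-1$. Let $\alpha_1,\dots,\alpha_n\in\mathbb{F}_q$ be pairwise distinct, let $G_{h,k}$ be the $k\times n$ matrix whose rows are $(\alpha_1^{e},\dots,\alpha_n^{e})$ for $e=0,1,\dots,k-2$ and $e=h$, let $\mathbf v=(v_1,\dots,v_n)\in(\mathbb{F}_q^* )^n$ and let $C_{h,\mathbf v}$ be the linear code generated by $G_{h,k}\cdot\mathrm{diag}(v_1,\dots,v_n)$. Let $u_i=\prod_{j\ne i}(\alpha_i-\alpha_j)^{-1}$ and $S_t=S_t(\alpha_1,\dots,\alpha_n)$. Then $C_{h,\mathbf v}$ is self-orthogonal if and only if there exists a polynomial $f(x)=\sum_{j=0}^{n-2k+2}f_jx^j\in\mathbb{F}_q[x]$ such that (1) $v_i^2=u_if(\alpha_i)$ for all $1\le i\le n$; (2) $\sum_{j=b}^{b+2r+1}f_jS_{j-b}=0$, where $b=n-2k-2r+1$; (3) for every $l$ with $(k-1)+r\le l\le(2k-3)+r$, $\sum_{j=s}^{s+l-2k+3}f_jS_{j-s}=0$, where $s=n-l-1$; here $f_j=0$ for $j<0$.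
   Context: Convention: $0^0=1$. $S_t(x_1,\dots,x_m)=\sum_{t_1+\dots+t_m=t,\ t_i\ge0}x_1^{t_1}\cdots x_m^{t_m}$ is the complete homogeneous symmetric polynomial of degree $t$ ($S_0=1$). A linear code $C$ is self-orthogonal if $C\subseteq C^\perp$ (Euclidean dual). *)

theory Defs
  imports "HOL-Computational_Algebra.Polynomial" "HOL-Library.FuncSet" "HOL-Library.Cardinality"
begin

definition complete_hom :: "nat \<Rightarrow> nat \<Rightarrow> (nat \<Rightarrow> 'a::comm_ring_1) \<Rightarrow> 'a" where
  "complete_hom n t x =
     (\<Sum>e\<in>{e \<in> {1..n} \<rightarrow>\<^sub>E {0..t}. (\<Sum>i\<in>{1..n}. e i) = t}. \<Prod>i\<in>{1..n}. x i ^ e i)"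

definition row_span :: "nat \<Rightarrow> 'r set \<Rightarrow> ('r \<Rightarrow> nat \<Rightarrow> 'a::field) \<Rightarrow> (nat \<Rightarrow> 'a) set" where
  "row_span n R g = {w. \<exists>c. w = (\<lambda>i. if i \<in> {1..n} then (\<Sum>e\<in>R. c e * g e i) else 0)}"

definition euclid_inner :: "nat \<Rightarrow> (nat \<Rightarrow> 'a::comm_ring_1) \<Rightarrow> (nat \<Rightarrow> 'a) \<Rightarrow> 'a" where
  "euclid_inner n x y = (\<Sum>i\<in>{1..n}. x i * y i)"

definition dual_code :: "nat \<Rightarrow> (nat \<Rightarrow> 'a::comm_ring_1) set \<Rightarrow> (nat \<Rightarrow> 'a) set" where
  "dual_code n C = {y. (\<forall>i. i \<notin> {1..n} \<longrightarrow> y i = 0) \<and> (\<forall>x\<in>C. euclid_inner n x y = 0)}"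

definition self_orthogonal :: "nat \<Rightarrow> (nat \<Rightarrow> 'a::comm_ring_1) set \<Rightarrow> bool" where
  "self_orthogonal n C \<longleftrightarrow> C \<subseteq> dual_code n C"

definition GRS_code :: "nat \<Rightarrow> nat \<Rightarrow> nat \<Rightarrow> (nat \<Rightarrow> 'a::field) \<Rightarrow> (nat \<Rightarrow> 'a) \<Rightarrow> (nat \<Rightarrow> 'a) set" where
  "GRS_code n k h \<alpha> v = row_span n ({0..k-2} \<union> {h}) (\<lambda>e i. \<alpha> i ^ e * v i)"

definition icoeff :: "'a::zero poly \<Rightarrow> int \<Rightarrow> 'a" where
  "icoeff f j = (if j < 0 then 0 else coeff f (nat j))"

end

theory Submission
  imports Defs
begin


definition hset :: "nat set \<Rightarrow> nat \<Rightarrow> (nat \<Rightarrow> nat) set" where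
  "hset A t = {e \<in> A \<rightarrow>\<^sub>E {0..t}. sum e A = t}"

definition Hs :: "nat set \<Rightarrow> nat \<Rightarrow> (nat \<Rightarrow> 'a::comm_ring_1) \<Rightarrow> 'a" where
  "Hs A t x = (\<Sum>e\<in>hset A t. \<Prod>i\<in>A. x i ^ e i)"

lemma complete_hom_Hs: "complete_hom n t x = Hs {1..n} t x"
  unfolding complete_hom_def Hs_def hset_def by simp

lemma finite_hset: "finite A \<Longrightarrow> finite (hset A t)"
  by (rule finite_subset[of _ "A \<rightarrow>\<^sub>E {0..t}"]) (auto simp: hset_def intro: finite_PiE)

lemma Hs_empty: "Hs {} t x = (if t = 0 then 1 else 0)"
proof -
  have "hset {} t = (if t = 0 then {\<lambda>_. undefined} else {})"
    unfolding hset_def by auto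
  then show ?thesis unfolding Hs_def by auto
qed

lemma Hs_insert:
  assumes fin: "finite A" and a: "a \<notin> A"
  shows "Hs (insert a A) t x = (\<Sum>s\<in>{0..t}. x a ^ s * Hs A (t - s) x)"
proof -
  have "(\<Sum>s\<in>{0..t}. x a ^ s * Hs A (t - s) x) = (\<Sum>s\<in>{0..t}. \<Sum>e\<in>hset A (t - s). x a ^ s * (\<Prod>i\<in>A. x i ^ e i))"
    unfolding Hs_def by (simp add: sum_distrib_left)
  also have "\<dots> = (\<Sum>(s,e)\<in>(SIGMA s:{0..t}. hset A (t - s)). x a ^ s * (\<Prod>i\<in>A. x i ^ e i))"
    by (rule sum.Sigma) (auto simp: finite_hset fin)
  also have "\<dots> = (\<Sum>p\<in>(SIGMA s:{0..t}. hset A (t - s)). x a ^ fst p * (\<Prod>i\<in>A. x i ^ snd p i))"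
    by (simp add: case_prod_beta)
  also have "\<dots> = (\<Sum>e\<in>hset (insert a A) t. \<Prod>i\<in>insert a A. x i ^ e i)"
  proof (rule sum.reindex_bij_witness[where j = "\<lambda>p. (snd p)(a := fst p)" and i = "\<lambda>e. (e a, restrict e A)"])
    fix p assume p: "p \<in> (SIGMA s:{0..t}. hset A (t - s))"
    obtain s e where pe: "p = (s, e)" by (cases p)
    with p have s: "s \<le> t" and e: "e \<in> A \<rightarrow>\<^sub>E {0..t - s}" and se: "sum e A = t - s"
      by (auto simp: hset_def)
    show "(((snd p)(a := fst p)) a, restrict ((snd p)(a := fst p)) A) = p"
      using pe e a by (auto simp: restrict_def PiE_def extensional_def fun_eq_iff)
    have "sum (e(a := s)) (insert a A) = s + sum e A"
      using fin a by (simp add: sum.insert_if) (rule sum.cong, auto)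
    then show "(snd p)(a := fst p) \<in> hset (insert a A) t"
      using pe e a s se by (auto simp: hset_def PiE_def extensional_def Pi_def)
    have "(\<Prod>i\<in>insert a A. x i ^ (e(a := s)) i) = x a ^ s * (\<Prod>i\<in>A. x i ^ e i)"
      using fin a by (simp add: prod.insert) (intro arg_cong[where f="\<lambda>z. x a ^ s * z"] prod.cong, auto)
    then show "(\<Prod>i\<in>insert a A. x i ^ ((snd p)(a := fst p)) i) = x a ^ fst p * (\<Prod>i\<in>A. x i ^ snd p i)"
      using pe by simp
  next
    fix e assume e: "e \<in> hset (insert a A) t"
    then have eP: "e \<in> insert a A \<rightarrow>\<^sub>E {0..t}" and se: "sum e (insert a A) = t"
      by (auto simp: hset_def)
    have sum2: "e a + sum e A = t" using se fin a by simp
    show "(snd (e a, restrict e A))(a := fst (e a, restrict e A)) = e"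
      using eP a by (auto simp: fun_eq_iff restrict_def PiE_def extensional_def)
    have "sum (restrict e A) A = sum e A" by (rule sum.cong) auto
    moreover have "\<forall>i\<in>A. e i \<le> t - e a"
    proof
      fix i assume "i \<in> A"
      then have "e i \<le> sum e A" using fin by (intro member_le_sum) auto
      then show "e i \<le> t - e a" using sum2 by simp
    qed
    ultimately show "(e a, restrict e A) \<in> (SIGMA s:{0..t}. hset A (t - s))"
      using sum2 by (auto simp: hset_def)
  qed
  finally show ?thesis unfolding Hs_def by simp
qed

lemma Hs_zero: "finite A \<Longrightarrow> Hs A 0 x = 1"
proof (induction A rule: finite_induct)
  case empty then show ?case by (simp add: Hs_empty)
next
  case (insert a A) then show ?case by (simp add: Hs_insert)
qed

lemma Hs_single: "Hs {a} t x = x a ^ t"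
proof -
  have "Hs (insert a {}) t x = (\<Sum>s\<in>{0..t}. x a ^ s * Hs {} (t - s) x)"
    by (rule Hs_insert) auto
  also have "\<dots> = (\<Sum>s\<in>{0..t}. if s = t then x a ^ s else 0)"
    by (rule sum.cong) (auto simp: Hs_empty)
  finally show ?thesis by simp
qed

lemma Hs_rec:
  assumes fin: "finite A" and a: "a \<notin> A"
  shows "Hs (insert a A) (Suc t) x = Hs A (Suc t) x + x a * Hs (insert a A) t x"
proof -
  have "Hs (insert a A) (Suc t) x = (\<Sum>s\<in>{0..Suc t}. x a ^ s * Hs A (Suc t - s) x)"
    using Hs_insert[OF assms] by blast
  also have "\<dots> = x a ^ 0 * Hs A (Suc t - 0) x + (\<Sum>s\<in>{0..t}. x a ^ Suc s * Hs A (Suc t - Suc s) x)"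
    by (subst sum.atLeast0_atMost_Suc_shift) simp
  also have "\<dots> = Hs A (Suc t) x + x a * (\<Sum>s\<in>{0..t}. x a ^ s * Hs A (t - s) x)"
    by (simp add: sum_distrib_left mult.assoc)
  finally show ?thesis using Hs_insert[OF assms, of t x] by simp
qed


definition Dv :: "nat set \<Rightarrow> nat \<Rightarrow> (nat \<Rightarrow> 'a::field) \<Rightarrow> 'a" where
  "Dv A m x = (\<Sum>i\<in>A. x i ^ m * (\<Prod>j\<in>A-{i}. inverse (x i - x j)))"

lemma Dv_rec:
  assumes fin: "finite B" and a: "a \<notin> B" and inj: "inj_on x (insert a B)"
  shows "Dv (insert a B) (Suc m) x = Dv B m x + x a * Dv (insert a B) m x"
proof -
  let ?P = "\<lambda>i. (\<Prod>j\<in>insert a B-{i}. inverse (x i - x j))"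
  have "Dv (insert a B) (Suc m) x - x a * Dv (insert a B) m x
      = (\<Sum>i\<in>insert a B. (x i - x a) * (x i ^ m * ?P i))"
    unfolding Dv_def sum_distrib_left sum_subtractf[symmetric]
    by (rule sum.cong) (auto simp: algebra_simps)
  also have "\<dots> = (\<Sum>i\<in>B. (x i - x a) * (x i ^ m * ?P i))"
    using fin a by (simp add: sum.insert)
  also have "\<dots> = Dv B m x"
    unfolding Dv_def
  proof (rule sum.cong)
    fix i assume i: "i \<in> B"
    have ne: "x i - x a \<noteq> 0" using inj i a by (auto simp: inj_on_def)
    have "insert a B - {i} = insert a (B - {i})" using i a by auto
    then have "?P i = inverse (x i - x a) * (\<Prod>j\<in>B-{i}. inverse (x i - x j))"
      using fin a by (simp add: prod.insert)
    then show "(x i - x a) * (x i ^ m * ?P i) = x i ^ m * (\<Prod>j\<in>B-{i}. inverse (x i - x j))"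
      using ne by (simp add: field_simps)
  qed simp
  finally show ?thesis by (simp add: algebra_simps)
qed

lemma Dv_single: "Dv {a} m x = x a ^ m"
  by (simp add: Dv_def)

lemma Dv_formula:
  "finite A \<Longrightarrow> card A = Suc N \<Longrightarrow> inj_on x A \<Longrightarrow>
     Dv A m x = (if m < N then 0 else Hs A (m - N) x)"
proof (induction N arbitrary: A m)
  case 0
  then obtain a where "A = {a}" by (auto simp: card_Suc_eq)
  then show ?case by (simp add: Dv_single Hs_single)
next
  case (Suc N)
  obtain a where aA: "a \<in> A" using Suc.prems by fastforce
  define B where "B = A - {a}"
  have AB: "A = insert a B" and aB: "a \<notin> B" and finB: "finite B" and cB: "card B = Suc N"
    using aA Suc.prems by (auto simp: B_def)
  obtain b where bB: "b \<in> B" using cB by fastforce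
  define C where "C = A - {b}"
  have AC: "A = insert b C" and bC: "b \<notin> C" and finC: "finite C" and cC: "card C = Suc N"
    using bB aA Suc.prems by (auto simp: C_def B_def)
  have injB: "inj_on x B" and injC: "inj_on x C"
    using Suc.prems by (auto simp: B_def C_def intro: inj_on_subset)
  have injA: "inj_on x A" and finA: "finite A" using Suc.prems by auto
  have ab: "x a \<noteq> x b" using Suc.prems aA bB by (auto simp: B_def inj_on_def)
  note IHN = Suc.IH
  show ?case
  proof (induction m)
    case 0
    have e1: "Dv A 1 x = Dv B 0 x + x a * Dv A 0 x"
      using Dv_rec[OF finB aB, of x 0] AB injA by simp
    have e2: "Dv A 1 x = Dv C 0 x + x b * Dv A 0 x"
      using Dv_rec[OF finC bC, of x 0] AC injA by simp
    have "Dv B 0 x = Dv C 0 x"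
      using IHN[OF finB cB injB, of 0] IHN[OF finC cC injC, of 0] by (simp add: Hs_zero finB finC)
    then have "(x a - x b) * Dv A 0 x = 0" using e1 e2 by (simp add: algebra_simps)
    then show ?case using ab by simp
  next
    case (Suc m)
    have e: "Dv A (Suc m) x = Dv B m x + x a * Dv A m x"
      using Dv_rec[OF finB aB, of x m] AB injA by simp
    have ihB: "Dv B m x = (if m < N then 0 else Hs B (m - N) x)"
      using IHN[OF finB cB injB] by simp
    consider "m < N" | "m = N" | "m > N" by linarith
    then show ?case
    proof cases
      case 1 then show ?thesis using e ihB Suc.IH by simp
    next
      case 2 then show ?thesis using e ihB Suc.IH by (simp add: Hs_zero finB finA)
    next
      case 3
      then have mm: "m - N = Suc (m - Suc N)" by simp
      show ?thesis using e ihB Suc.IH 3 Hs_rec[OF finB aB, of "m - Suc N" x] AB mm by simp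
    qed
  qed
qed


lemma poly_as_sum_lt:
  fixes f :: "'a::comm_ring_1 poly"
  assumes "degree f < N"
  shows "poly f y = (\<Sum>j<N. coeff f j * y ^ j)"
proof -
  have "poly f y = (\<Sum>j\<le>degree f. coeff f j * y ^ j)" by (rule poly_altdef)
  also have "\<dots> = (\<Sum>j<N. coeff f j * y ^ j)"
    using assms by (intro sum.mono_neutral_left) (auto simp: coeff_eq_0)
  finally show ?thesis .
qed

lemma key_sum:
  fixes x :: "nat \<Rightarrow> 'a::field"
  assumes fin: "finite A" and deg: "degree f < N"
  shows "(\<Sum>i\<in>A. (\<Prod>j\<in>A-{i}. inverse (x i - x j)) * poly f (x i) * x i ^ m)
       = (\<Sum>j<N. coeff f j * Dv A (m + j) x)"
proof -
  have "(\<Sum>i\<in>A. (\<Prod>j\<in>A-{i}. inverse (x i - x j)) * poly f (x i) * x i ^ m)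
      = (\<Sum>i\<in>A. \<Sum>j<N. coeff f j * (x i ^ (m + j) * (\<Prod>j\<in>A-{i}. inverse (x i - x j))))"
    by (rule sum.cong) (auto simp: poly_as_sum_lt[OF deg] sum_distrib_left sum_distrib_right
        power_add intro!: sum.cong)
  also have "\<dots> = (\<Sum>j<N. \<Sum>i\<in>A. coeff f j * (x i ^ (m + j) * (\<Prod>j\<in>A-{i}. inverse (x i - x j))))"
    by (rule sum.swap)
  also have "\<dots> = (\<Sum>j<N. coeff f j * Dv A (m + j) x)"
    by (simp add: Dv_def sum_distrib_left)
  finally show ?thesis .
qed

lemma so_iff:
  fixes g :: "'r \<Rightarrow> nat \<Rightarrow> 'a::field"
  assumes fin: "finite R"
  shows "self_orthogonal n (row_span n R g) \<longleftrightarrow>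
    (\<forall>e\<in>R. \<forall>e'\<in>R. (\<Sum>i\<in>{1..n}. g e i * g e' i) = 0)"
proof
  assume so: "self_orthogonal n (row_span n R g)"
  show "\<forall>e\<in>R. \<forall>e'\<in>R. (\<Sum>i\<in>{1..n}. g e i * g e' i) = 0"
  proof (intro ballI)
    fix e e' assume e: "e \<in> R" and e': "e' \<in> R"
    define w where "w = (\<lambda>e. (\<lambda>i. if i \<in> {1..n} then (\<Sum>e''\<in>R. (if e'' = e then 1 else 0) * g e'' i) else 0))"
    have wd: "(\<Sum>e''\<in>R. (if e'' = z then 1 else 0) * g e'' i) = g z i" if "z \<in> R" for z i
    proof -
      have "(\<Sum>e''\<in>R. (if e'' = z then 1 else 0) * g e'' i) = (\<Sum>e''\<in>R. if e'' = z then g z i else 0)"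
        by (rule sum.cong) auto
      then show ?thesis using that fin by simp
    qed
    have w: "w e = (\<lambda>i. if i \<in> {1..n} then g e i else 0)" "w e' = (\<lambda>i. if i \<in> {1..n} then g e' i else 0)"
      using e e' by (auto simp: w_def wd)
    have "w z \<in> row_span n R g" for z
      unfolding row_span_def w_def
      by (rule CollectI, rule exI[where x="\<lambda>e''. if e'' = z then 1 else 0"], rule refl)
    then have "euclid_inner n (w e) (w e') = 0"
      using so unfolding self_orthogonal_def dual_code_def by blast
    then show "(\<Sum>i\<in>{1..n}. g e i * g e' i) = 0"
      unfolding euclid_inner_def w by simp
  qed
next
  assume H: "\<forall>e\<in>R. \<forall>e'\<in>R. (\<Sum>i\<in>{1..n}. g e i * g e' i) = 0"
  show "self_orthogonal n (row_span n R g)"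
    unfolding self_orthogonal_def dual_code_def
  proof (intro subsetI CollectI conjI allI impI ballI)
    fix y i assume "y \<in> row_span n R g" "i \<notin> {1..n}"
    then show "y i = 0" unfolding row_span_def by auto
  next
    fix y w assume y: "y \<in> row_span n R g" and w: "w \<in> row_span n R g"
    obtain c where c: "y = (\<lambda>i. if i \<in> {1..n} then (\<Sum>e\<in>R. c e * g e i) else 0)"
      using y unfolding row_span_def by blast
    obtain d where d: "w = (\<lambda>i. if i \<in> {1..n} then (\<Sum>e\<in>R. d e * g e i) else 0)"
      using w unfolding row_span_def by blast
    have "euclid_inner n w y = (\<Sum>i\<in>{1..n}. (\<Sum>e\<in>R. d e * g e i) * (\<Sum>e'\<in>R. c e' * g e' i))"
      unfolding euclid_inner_def c d by simp
    also have "\<dots> = (\<Sum>i\<in>{1..n}. \<Sum>e\<in>R. \<Sum>e'\<in>R. (d e * g e i) * (c e' * g e' i))"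
      by (simp add: sum_product)
    also have "\<dots> = (\<Sum>i\<in>{1..n}. \<Sum>e\<in>R. \<Sum>e'\<in>R. (d e * c e') * (g e i * g e' i))"
      by (simp add: mult_ac)
    also have "\<dots> = (\<Sum>e\<in>R. \<Sum>i\<in>{1..n}. \<Sum>e'\<in>R. (d e * c e') * (g e i * g e' i))"
      by (rule sum.swap)
    also have "\<dots> = (\<Sum>e\<in>R. \<Sum>e'\<in>R. \<Sum>i\<in>{1..n}. (d e * c e') * (g e i * g e' i))"
      by (rule sum.cong[OF refl], rule sum.swap)
    also have "\<dots> = (\<Sum>e\<in>R. \<Sum>e'\<in>R. (d e * c e') * (\<Sum>i\<in>{1..n}. g e i * g e' i))"
      by (simp add: sum_distrib_left)
    also have "\<dots> = 0" using H by simp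
    finally show "euclid_inner n w y = 0" .
  qed
qed

lemma interp:
  fixes x w :: "nat \<Rightarrow> 'a::field"
  assumes inj: "inj_on x {1..n}" and i: "i \<in> {1..n}"
  shows "w i = (\<Prod>j\<in>{1..n}-{i}. inverse (x i - x j)) *
     poly (\<Sum>l\<in>{1..n}. smult (w l) (\<Prod>j\<in>{1..n}-{l}. [:- x j, 1:])) (x i)"
proof -
  have pl: "poly (\<Prod>j\<in>{1..n}-{l}. [:- x j, 1:]) (x i) = (\<Prod>j\<in>{1..n}-{l}. x i - x j)" for l
    unfolding poly_prod by (rule prod.cong) simp_all
  have "poly (\<Sum>l\<in>{1..n}. smult (w l) (\<Prod>j\<in>{1..n}-{l}. [:- x j, 1:])) (x i)
      = (\<Sum>l\<in>{1..n}. if l = i then w i * (\<Prod>j\<in>{1..n}-{i}. x i - x j) else 0)"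
    unfolding poly_sum
  proof (rule sum.cong[OF refl])
    fix l assume l: "l \<in> {1..n}"
    show "poly (smult (w l) (\<Prod>j\<in>{1..n}-{l}. [:- x j, 1:])) (x i) =
          (if l = i then w i * (\<Prod>j\<in>{1..n}-{i}. x i - x j) else 0)"
    proof (cases "l = i")
      case True then show ?thesis by (simp only: poly_smult pl if_True refl)
    next
      case False
      then have "(\<Prod>j\<in>{1..n}-{l}. x i - x j) = 0"
        using i by (intro prod_zero) auto
      then show ?thesis using False by (simp only: poly_smult pl if_False mult_zero_right)
    qed
  qed
  also have "\<dots> = w i * (\<Prod>j\<in>{1..n}-{i}. x i - x j)" by (subst sum.delta) (use i in auto)
  finally have p: "poly (\<Sum>l\<in>{1..n}. smult (w l) (\<Prod>j\<in>{1..n}-{l}. [:- x j, 1:])) (x i)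
     = w i * (\<Prod>j\<in>{1..n}-{i}. x i - x j)" .
  have "(\<Prod>j\<in>{1..n}-{i}. inverse (x i - x j)) * (\<Prod>j\<in>{1..n}-{i}. x i - x j)
      = (\<Prod>j\<in>{1..n}-{i}. inverse (x i - x j) * (x i - x j))"
    by (rule prod.distrib[symmetric])
  also have "\<dots> = 1"
  proof (rule prod.neutral, rule ballI)
    fix j assume j: "j \<in> {1..n}-{i}"
    have "x i \<noteq> x j" using inj i j unfolding inj_on_def by blast
    then show "inverse (x i - x j) * (x i - x j) = 1" by simp
  qed
  finally have q: "(\<Prod>j\<in>{1..n}-{i}. inverse (x i - x j)) * (\<Prod>j\<in>{1..n}-{i}. x i - x j) = 1" .
  show ?thesis unfolding p using q by (metis mult.left_commute mult.right_neutral)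
qed

lemma interp_deg:
  fixes x w :: "nat \<Rightarrow> 'a::field"
  shows "degree (\<Sum>l\<in>{1..n}. smult (w l) (\<Prod>j\<in>{1..n}-{l}. [:- x j, 1:])) \<le> n - 1"
proof (rule degree_sum_le)
  fix l assume l: "l \<in> {1..n}"
  have "degree (\<Prod>j\<in>{1..n}-{l}. [:- x j, 1:]) \<le> sum (degree \<circ> (\<lambda>j. [:- x j, 1:])) ({1..n}-{l})"
    by (rule degree_prod_sum_le) simp
  also have "sum (degree \<circ> (\<lambda>j. [:- x j, 1:])) ({1..n}-{l}) = card ({1..n}-{l})"
    by (simp add: o_def)
  also have "card ({1..n}-{l}) = n - 1" using l by simp
  finally have d: "degree (\<Prod>j\<in>{1..n}-{l}. [:- x j, 1:]) \<le> n - 1" .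
  show "degree (smult (w l) (\<Prod>j\<in>{1..n}-{l}. [:- x j, 1:])) \<le> n - 1"
    by (rule order_trans[OF degree_smult_le d])
qed simp

lemma conv_sum:
  fixes f :: "'a::comm_ring_1 poly" and S :: "nat \<Rightarrow> 'a"
  assumes fT: "\<forall>j. int j > T \<longrightarrow> coeff f j = 0" and Tn: "T < int n" and n1: "1 \<le> n"
    and s: "s = int n - int m - 1"
  shows "(\<Sum>j\<in>{s..T}. icoeff f j * S (nat (j - s)))
       = (\<Sum>j<n. coeff f j * (if m + j < n - 1 then 0 else S (m + j - (n - 1))))"
proof -
  define G where "G j = (if s \<le> j then icoeff f j * S (nat (j - s)) else 0)" for j
  have ic: "icoeff f j = 0" if "j < 0 \<or> j > T" for j
    using that fT by (auto simp: icoeff_def)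
  have "(\<Sum>j\<in>{s..T}. icoeff f j * S (nat (j - s))) = (\<Sum>j\<in>{s..T}. G j)"
    by (rule sum.cong) (auto simp: G_def)
  also have "\<dots> = (\<Sum>j\<in>{s..T} \<union> int ` {..<n}. G j)"
    by (rule sum.mono_neutral_left) (auto simp: G_def ic)
  also have "\<dots> = (\<Sum>j\<in>int ` {..<n}. G j)"
  proof (rule sum.mono_neutral_right)
    show "\<forall>j\<in>{s..T} \<union> int ` {..<n} - int ` {..<n}. G j = 0"
    proof
      fix j assume j: "j \<in> {s..T} \<union> int ` {..<n} - int ` {..<n}"
      have "j < 0"
      proof (rule ccontr)
        assume "\<not> j < 0"
        then have "j = int (nat j)" "nat j < n" using j Tn by auto
        then show False using j by (metis DiffD2 imageI lessThan_iff)
      qed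
      then show "G j = 0" by (simp add: G_def ic)
    qed
  qed auto
  also have "\<dots> = (\<Sum>j<n. G (int j))"
    by (rule sum.reindex_cong[of int]) (auto simp: inj_on_def)
  also have "\<dots> = (\<Sum>j<n. coeff f j * (if m + j < n - 1 then 0 else S (m + j - (n - 1))))"
  proof (rule sum.cong[OF refl])
    fix j assume "j \<in> {..<n}"
    have e1: "(s \<le> int j) = (\<not> m + j < n - 1)" using s n1 by auto
    have e2: "nat (int j - s) = m + j - (n - 1)" using s n1 by auto
    show "G (int j) = coeff f j * (if m + j < n - 1 then 0 else S (m + j - (n - 1)))"
      unfolding G_def e1 e2 by (simp add: icoeff_def)
  qed
  finally show ?thesis .
qed



theorem theorem4p12:
  fixes \<alpha> v :: "nat \<Rightarrow> 'a::{field,finite}"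
    and n k r h :: nat
  assumes "3 \<le> k" and "k \<le> n - 2" and "int n - 2 \<le> int (CARD('a)) - 2"
    and "k - 1 \<le> r" and "int r \<le> int (CARD('a)) - int k - 1"
    and "h = (k - 1) + r"
    and "inj_on \<alpha> {1..n}"
    and "\<forall>i\<in>{1..n}. v i \<noteq> 0"
  shows "self_orthogonal n (GRS_code n k h \<alpha> v) \<longleftrightarrow>
    (\<exists>f :: 'a poly.
       (\<forall>j. int j > int n - 2 * int k + 2 \<longrightarrow> coeff f j = 0) \<and>
       (\<forall>i\<in>{1..n}. (v i)^2 = (\<Prod>j\<in>{1..n}-{i}. inverse (\<alpha> i - \<alpha> j)) * poly f (\<alpha> i)) \<and>
       (let b = int n - 2 * int k - 2 * int r + 1 in
          (\<Sum>j\<in>{b..b + 2 * int r + 1}. icoeff f j * complete_hom n (nat (j - b)) \<alpha>) = 0) \<and>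
       (\<forall>l::int. (int k - 1) + int r \<le> l \<and> l \<le> (2 * int k - 3) + int r \<longrightarrow>
          (let s = int n - l - 1 in
             (\<Sum>j\<in>{s..s + l - 2 * int k + 3}. icoeff f j * complete_hom n (nat (j - s)) \<alpha>) = 0)))"
proof -
  note k3 = assms(1) and kn = assms(2) and hdef = assms(6) and inj = assms(7)
  have n5: "5 \<le> n" using k3 kn by linarith
  define T where "T = int n - 2 * int k + 2"
  have Tn: "T < int n" using k3 by (simp add: T_def)
  define D where "D m = Dv {1..n} m \<alpha>" for m
  have Dform: "D m = (if m < n - 1 then 0 else complete_hom n (m - (n - 1)) \<alpha>)" for m
    unfolding D_def complete_hom_Hs
    by (rule Dv_formula) (use n5 inj in auto)
  have S0: "complete_hom n 0 \<alpha> = 1" by (simp add: complete_hom_Hs Hs_zero)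
  define R where "R = {0..k-2} \<union> {h}"
  define P where "P m \<longleftrightarrow> (\<Sum>i\<in>{1..n}. v i ^ 2 * \<alpha> i ^ m) = 0" for m
  have so: "self_orthogonal n (GRS_code n k h \<alpha> v) \<longleftrightarrow> (\<forall>e\<in>R. \<forall>e'\<in>R. P (e + e'))"
    unfolding GRS_code_def so_iff[OF finite_UnI[OF finite_atLeastAtMost finite.insertI[OF finite.emptyI]]]
      P_def R_def
    by (simp add: power_add power2_eq_square mult_ac)
  have L: "(\<Sum>i\<in>{1..n}. v i ^ 2 * \<alpha> i ^ m) = (\<Sum>j<n. coeff f j * D (m + j))"
    if "degree f < n" "\<forall>i\<in>{1..n}. v i ^ 2 = (\<Prod>j\<in>{1..n}-{i}. inverse (\<alpha> i - \<alpha> j)) * poly f (\<alpha> i)"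
    for f :: "'a poly" and m
  proof -
    have "(\<Sum>i\<in>{1..n}. v i ^ 2 * \<alpha> i ^ m)
        = (\<Sum>i\<in>{1..n}. (\<Prod>j\<in>{1..n}-{i}. inverse (\<alpha> i - \<alpha> j)) * poly f (\<alpha> i) * \<alpha> i ^ m)"
      using that(2) by (intro sum.cong) auto
    also have "\<dots> = (\<Sum>j<n. coeff f j * D (m + j))"
      unfolding D_def by (rule key_sum) (use that(1) in auto)
    finally show ?thesis .
  qed
  have Conv: "(\<Sum>j\<in>{s..t}. icoeff f j * complete_hom n (nat (j - s)) \<alpha>) = (\<Sum>j<n. coeff f j * D (m + j))"
    if "s = int n - int m - 1" "t = T" "\<forall>j. int j > T \<longrightarrow> coeff f j = 0" for s t f m
    unfolding Dform using conv_sum[OF that(3) Tn _ that(1), of "\<lambda>t. complete_hom n t \<alpha>"] n5 that(2)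
    by simp
  have hR: "h \<in> R" by (simp add: R_def)
  have hge: "h \<ge> 2 * k - 2" using hdef assms(4) by simp
  show ?thesis
  proof
    assume SO: "self_orthogonal n (GRS_code n k h \<alpha> v)"
    then have SO': "\<forall>e\<in>R. \<forall>e'\<in>R. P (e + e')" using so by simp
    define g :: "'a poly" where "g = (\<Sum>l\<in>{1..n}. smult (v l ^ 2) (\<Prod>j\<in>{1..n}-{l}. [:- \<alpha> j, 1:]))"
    have gv: "\<forall>i\<in>{1..n}. v i ^ 2 = (\<Prod>j\<in>{1..n}-{i}. inverse (\<alpha> i - \<alpha> j)) * poly g (\<alpha> i)"
      unfolding g_def using interp[OF inj, of _ "\<lambda>i. v i ^ 2"] by blast
    have gdeg: "degree g < n" using interp_deg[where n=n and w="\<lambda>i. v i ^ 2" and x=\<alpha>] n5 unfolding g_def by linarith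
    have PL: "(\<Sum>j<n. coeff g j * D (m + j)) = 0" if "P m" for m
      using that L[OF gdeg gv, of m] by (simp add: P_def)
    have low: "P m" if "m \<le> 2 * k - 4" for m
    proof -
      have "min m (k - 2) \<in> R" "m - min m (k - 2) \<in> R" using that by (auto simp: R_def)
      then have "P (min m (k - 2) + (m - min m (k - 2)))" using SO' by blast
      then show ?thesis by simp
    qed
    have tri: "coeff g (n - 1 - d) = 0" if "d \<le> 2 * k - 4" "d < n" for d
      using that
    proof (induction d rule: less_induct)
      case (less d)
      have "(\<Sum>j<n. coeff g j * D (d + j)) = (\<Sum>j<n. if j = n - 1 - d then coeff g j else 0)"
      proof (rule sum.cong[OF refl])
        fix j assume j: "j \<in> {..<n}"
        consider "d + j < n - 1" | "j = n - 1 - d" | "d + j > n - 1" by linarith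
        then show "coeff g j * D (d + j) = (if j = n - 1 - d then coeff g j else 0)"
        proof cases
          case 1 then show ?thesis by (auto simp: Dform)
        next
          case 2 then show ?thesis using less.prems by (auto simp: Dform S0)
        next
          case 3
          then have "coeff g (n - 1 - (n - 1 - j)) = 0"
            using less.IH[of "n - 1 - j"] less.prems j by auto
          then show ?thesis using 3 j by auto
        qed
      qed
      also have "\<dots> = coeff g (n - 1 - d)" using less.prems by simp
      finally show ?case using PL[OF low[OF less.prems(1)]] by simp
    qed
    have gT: "\<forall>j. int j > T \<longrightarrow> coeff g j = 0"
    proof (intro allI impI)
      fix j assume j: "int j > T"
      show "coeff g j = 0"
      proof (cases "j < n")
        case True
        then have "coeff g (n - 1 - (n - 1 - j)) = 0" using j k3 by (intro tri) (auto simp: T_def)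
        then show ?thesis using True by simp
      next
        case False then show ?thesis using gdeg by (simp add: coeff_eq_0)
      qed
    qed
    have c2: "let b = int n - 2 * int k - 2 * int r + 1 in
          (\<Sum>j\<in>{b..b + 2 * int r + 1}. icoeff g j * complete_hom n (nat (j - b)) \<alpha>) = 0"
    proof -
      have "P (h + h)" using SO' hR by blast
      then have z: "(\<Sum>j<n. coeff g j * D (2 * h + j)) = 0" using PL by (simp add: mult_2)
      show ?thesis
        unfolding Let_def
        by (subst Conv[OF _ _ gT, of _ "2 * h"]) (use hdef k3 z in \<open>auto simp: T_def\<close>)
    qed
    have c3: "\<forall>l::int. (int k - 1) + int r \<le> l \<and> l \<le> (2 * int k - 3) + int r \<longrightarrow>
          (let s = int n - l - 1 in
             (\<Sum>j\<in>{s..s + l - 2 * int k + 3}. icoeff g j * complete_hom n (nat (j - s)) \<alpha>) = 0)"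
    proof (intro allI impI)
      fix l :: int assume l: "(int k - 1) + int r \<le> l \<and> l \<le> (2 * int k - 3) + int r"
      define m where "m = nat l"
      have lm: "l = int m" using l m_def by auto
      have e: "m - h \<in> R" "m - h + h = m" using l hdef k3 by (auto simp: R_def m_def)
      have "P m" using SO' e hR by metis
      then show "let s = int n - l - 1 in
             (\<Sum>j\<in>{s..s + l - 2 * int k + 3}. icoeff g j * complete_hom n (nat (j - s)) \<alpha>) = 0"
        unfolding Let_def
        by (subst Conv[OF _ _ gT, of _ m]) (use lm PL in \<open>auto simp: T_def\<close>)
    qed
    show "\<exists>f :: 'a poly.
       (\<forall>j. int j > int n - 2 * int k + 2 \<longrightarrow> coeff f j = 0) \<and>
       (\<forall>i\<in>{1..n}. (v i)^2 = (\<Prod>j\<in>{1..n}-{i}. inverse (\<alpha> i - \<alpha> j)) * poly f (\<alpha> i)) \<and>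
       (let b = int n - 2 * int k - 2 * int r + 1 in
          (\<Sum>j\<in>{b..b + 2 * int r + 1}. icoeff f j * complete_hom n (nat (j - b)) \<alpha>) = 0) \<and>
       (\<forall>l::int. (int k - 1) + int r \<le> l \<and> l \<le> (2 * int k - 3) + int r \<longrightarrow>
          (let s = int n - l - 1 in
             (\<Sum>j\<in>{s..s + l - 2 * int k + 3}. icoeff f j * complete_hom n (nat (j - s)) \<alpha>) = 0))"
      using gT gv c2 c3 unfolding T_def by blast
  next
    assume "\<exists>f :: 'a poly.
       (\<forall>j. int j > int n - 2 * int k + 2 \<longrightarrow> coeff f j = 0) \<and>
       (\<forall>i\<in>{1..n}. (v i)^2 = (\<Prod>j\<in>{1..n}-{i}. inverse (\<alpha> i - \<alpha> j)) * poly f (\<alpha> i)) \<and>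
       (let b = int n - 2 * int k - 2 * int r + 1 in
          (\<Sum>j\<in>{b..b + 2 * int r + 1}. icoeff f j * complete_hom n (nat (j - b)) \<alpha>) = 0) \<and>
       (\<forall>l::int. (int k - 1) + int r \<le> l \<and> l \<le> (2 * int k - 3) + int r \<longrightarrow>
          (let s = int n - l - 1 in
             (\<Sum>j\<in>{s..s + l - 2 * int k + 3}. icoeff f j * complete_hom n (nat (j - s)) \<alpha>) = 0))"
    then obtain f :: "'a poly" where fT: "\<forall>j. int j > T \<longrightarrow> coeff f j = 0"
      and fv: "\<forall>i\<in>{1..n}. (v i)^2 = (\<Prod>j\<in>{1..n}-{i}. inverse (\<alpha> i - \<alpha> j)) * poly f (\<alpha> i)"
      and c2: "let b = int n - 2 * int k - 2 * int r + 1 in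
          (\<Sum>j\<in>{b..b + 2 * int r + 1}. icoeff f j * complete_hom n (nat (j - b)) \<alpha>) = 0"
      and c3: "\<forall>l::int. (int k - 1) + int r \<le> l \<and> l \<le> (2 * int k - 3) + int r \<longrightarrow>
          (let s = int n - l - 1 in
             (\<Sum>j\<in>{s..s + l - 2 * int k + 3}. icoeff f j * complete_hom n (nat (j - s)) \<alpha>) = 0)"
      unfolding T_def by blast
    have fdeg: "degree f < n"
    proof -
      have "degree f \<le> n - 1"
        by (rule degree_le) (use fT Tn in auto)
      then show ?thesis using n5 by linarith
    qed
    have PL: "P m \<longleftrightarrow> (\<Sum>j<n. coeff f j * D (m + j)) = 0" for m
      using L[OF fdeg fv, of m] by (simp add: P_def)
    have "\<forall>e\<in>R. \<forall>e'\<in>R. P (e + e')"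
    proof (intro ballI)
      fix e e' assume e: "e \<in> R" and e': "e' \<in> R"
      consider "e \<le> k - 2" "e' \<le> k - 2" | "e = h" "e' = h" | "e \<le> k - 2" "e' = h" | "e = h" "e' \<le> k - 2"
        using e e' by (auto simp: R_def)
      then show "P (e + e')"
      proof cases
        case 1
        have "(\<Sum>j<n. coeff f j * D (e + e' + j)) = 0"
        proof (rule sum.neutral, rule ballI)
          fix j assume j: "j \<in> {..<n}"
          show "coeff f j * D (e + e' + j) = 0"
          proof (cases "int j > T")
            case True then show ?thesis using fT by simp
          next
            case False
            then have "e + e' + j < n - 1" using 1 k3 by (simp add: T_def)
            then show ?thesis by (simp add: Dform)
          qed
        qed
        then show ?thesis using PL by simp
      next
        case 2
        have "(\<Sum>j<n. coeff f j * D (2 * h + j)) = 0"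
          using c2 unfolding Let_def
          by (subst (asm) Conv[OF _ _ fT, of _ "2 * h"]) (use hdef k3 in \<open>auto simp: T_def\<close>)
        then show ?thesis using PL 2 by (simp add: mult_2)
      next
        case 3
        have rng: "int k - 1 + int r \<le> int (e + h) \<and> int (e + h) \<le> 2 * int k - 3 + int r"
          using 3 hdef k3 by auto
        have z: "(\<Sum>j\<in>{int n - int (e + h) - 1 .. int n - int (e + h) - 1 + int (e + h) - 2 * int k + 3}.
            icoeff f j * complete_hom n (nat (j - (int n - int (e + h) - 1))) \<alpha>) = 0"
          using c3 rng unfolding Let_def by blast
        have eq: "(\<Sum>j\<in>{int n - int (e + h) - 1 .. int n - int (e + h) - 1 + int (e + h) - 2 * int k + 3}.
            icoeff f j * complete_hom n (nat (j - (int n - int (e + h) - 1))) \<alpha>)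
            = (\<Sum>j<n. coeff f j * D ((e + h) + j))"
          by (rule Conv[OF _ _ fT]) (auto simp: T_def)
        have "(\<Sum>j<n. coeff f j * D (e + h + j)) = 0"
          using z eq by simp
        then show ?thesis using PL 3 by simp
      next
        case 4
        have rng: "int k - 1 + int r \<le> int (e' + h) \<and> int (e' + h) \<le> 2 * int k - 3 + int r"
          using 4 hdef k3 by auto
        have z: "(\<Sum>j\<in>{int n - int (e' + h) - 1 .. int n - int (e' + h) - 1 + int (e' + h) - 2 * int k + 3}.
            icoeff f j * complete_hom n (nat (j - (int n - int (e' + h) - 1))) \<alpha>) = 0"
          using c3 rng unfolding Let_def by blast
        have eq: "(\<Sum>j\<in>{int n - int (e' + h) - 1 .. int n - int (e' + h) - 1 + int (e' + h) - 2 * int k + 3}.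
            icoeff f j * complete_hom n (nat (j - (int n - int (e' + h) - 1))) \<alpha>)
            = (\<Sum>j<n. coeff f j * D ((e' + h) + j))"
          by (rule Conv[OF _ _ fT]) (auto simp: T_def)
        have "(\<Sum>j<n. coeff f j * D (e' + h + j)) = 0"
          using z eq by simp
        then show ?thesis using PL 4 by (simp add: add.commute)
      qed
    qed
    then show "self_orthogonal n (GRS_code n k h \<alpha> v)" using so by simp
  qed
qed

end
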